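(* Let $I\ge0$, $\beta>0$, $\alpha,\omega\in S_I$ with $\alpha_0>0$. The endpoint constraint $(\alpha,\omega,\beta)$ is feasible if and only if $$\sum_{j=0}^i\alpha_j\ge\sum_{j=0}^i\omega_j\quad (i=0,\dots,I)$$ and $$\sum_{i=0}^I i\omega_i+(I+1)\omega_{I+}\le\sum_{k=0}^{I+1}k\alpha_k+\beta.$$
   Context: $S_I=\{\gamma\in\mathbb{R}^{I+2}:\gamma_j\ge0,\sum_{j=0}^{I+1}\gamma_j=1\}$; components of $\alpha$ are written $\alpha_0,\dots,\alpha_{I+1}$ and of $\omega$ as $\omega_0,\dots,\omega_I,\omega_{I+}$. A valid occupancy function on $[0,\beta]$ is an absolutely continuous $\gamma:[0,\beta]\to S_I$ whose rate $\theta$ (defined by $\dot\gamma_0=-\theta_0$, $\dot\gamma_j=\theta_{j-1}-\theta_j$ for $1\le j\le I$, $\dot\gamma_{I+}=\theta_I$, $\sum_j\theta_j=1$) lies in $S_I$ for a.e. $x$. $(\alpha,\omega,\beta)$ is feasible if there exists a valid occupancy function $\gamma$ on $[0,\beta]$ with $\gamma(0)=\alpha$ and $\gamma(\beta)=\omega$. *)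

theory Defs
  imports "HOL-Analysis.Analysis"
begin

text \<open>Points of R^(I+2) are represented as functions nat => real; only the
components 0..I+1 are meaningful, component I+1 playing the role of the
component "I+".\<close>

definition simplexI :: "nat \<Rightarrow> (nat \<Rightarrow> real) set" where
  "simplexI I = {g. (\<forall>j\<le>I+1. 0 \<le> g j) \<and> (\<Sum>j\<le>I+1. g j) = 1}"

definition abs_cont_on :: "real \<Rightarrow> real \<Rightarrow> (real \<Rightarrow> real) \<Rightarrow> bool" where
  "abs_cont_on a b f \<longleftrightarrow>
     (\<forall>e>0. \<exists>d>0. \<forall>(n::nat) (u::nat \<Rightarrow> real) (v::nat \<Rightarrow> real).
        (\<forall>k<n. a \<le> u k \<and> u k \<le> v k \<and> v k \<le> b) \<and>
        (\<forall>k<n. \<forall>l<n. k \<noteq> l \<longrightarrow> v k \<le> u l \<or> v l \<le> u k) \<and>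
        (\<Sum>k<n. v k - u k) < d
        \<longrightarrow> (\<Sum>k<n. \<bar>f (v k) - f (u k)\<bar>) < e)"

definition rate_deriv :: "nat \<Rightarrow> (nat \<Rightarrow> real) \<Rightarrow> nat \<Rightarrow> real" where
  "rate_deriv I \<theta> j = (if j = 0 then - \<theta> 0 else if j \<le> I then \<theta> (j - 1) - \<theta> j else \<theta> I)"

definition valid_occupancy :: "nat \<Rightarrow> real \<Rightarrow> (real \<Rightarrow> nat \<Rightarrow> real) \<Rightarrow> bool" where
  "valid_occupancy I \<beta> \<gamma> \<longleftrightarrow>
     (\<forall>j\<le>I+1. abs_cont_on 0 \<beta> (\<lambda>x. \<gamma> x j)) \<and>
     (\<forall>x\<in>{0..\<beta>}. \<gamma> x \<in> simplexI I) \<and>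
     (\<exists>\<theta> :: real \<Rightarrow> nat \<Rightarrow> real.
        AE x in lebesgue. x \<in> {0..\<beta>} \<longrightarrow>
          (\<forall>j\<le>I+1. ((\<lambda>t. \<gamma> t j) has_real_derivative rate_deriv I (\<theta> x) j) (at x))
          \<and> \<theta> x \<in> simplexI I)"

definition feasible :: "nat \<Rightarrow> (nat \<Rightarrow> real) \<Rightarrow> (nat \<Rightarrow> real) \<Rightarrow> real \<Rightarrow> bool" where
  "feasible I \<alpha> \<omega> \<beta> \<longleftrightarrow>
     (\<exists>\<gamma>. valid_occupancy I \<beta> \<gamma> \<and> (\<forall>j\<le>I+1. \<gamma> 0 j = \<alpha> j) \<and> (\<forall>j\<le>I+1. \<gamma> \<beta> j = \<omega> j))"

end

theory Submission
  imports Defs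
begin


lemma ac_D0:
  assumes "abs_cont_on a b f" "e > 0"
  shows "\<exists>d>0. \<forall>(n::nat) u v. (\<forall>k<n. a \<le> u k \<and> u k \<le> v k \<and> v k \<le> b) \<and>
        (\<forall>k<n. \<forall>l<n. k \<noteq> l \<longrightarrow> v k \<le> u l \<or> v l \<le> u k) \<and>
        (\<Sum>k<n. v k - u k) < d \<longrightarrow> (\<Sum>k<n. \<bar>f (v k) - f (u k)\<bar>) < e"
proof -
  have "e > 0 \<longrightarrow> (\<exists>d>0. \<forall>(n::nat) u v. (\<forall>k<n. a \<le> u k \<and> u k \<le> v k \<and> v k \<le> b) \<and>
        (\<forall>k<n. \<forall>l<n. k \<noteq> l \<longrightarrow> v k \<le> u l \<or> v l \<le> u k) \<and>
        (\<Sum>k<n. v k - u k) < d \<longrightarrow> (\<Sum>k<n. \<bar>f (v k) - f (u k)\<bar>) < e)"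
    using assms(1) unfolding abs_cont_on_def by (rule spec)
  then show ?thesis using assms(2) by (rule mp)
qed

lemma ac_D:
  assumes "abs_cont_on a b f" "e > 0"
  obtains d where "d > 0" "\<And>(n::nat) u v. (\<forall>k<n. a \<le> u k \<and> u k \<le> v k \<and> v k \<le> b) \<and>
        (\<forall>k<n. \<forall>l<n. k \<noteq> l \<longrightarrow> v k \<le> u l \<or> v l \<le> u k) \<and>
        (\<Sum>k<n. v k - u k) < d \<Longrightarrow> (\<Sum>k<n. \<bar>f (v k) - f (u k)\<bar>) < e"
proof -
  from ac_D0[OF assms] obtain d where "d > 0" and D: "\<forall>(n::nat) u v. (\<forall>k<n. a \<le> u k \<and> u k \<le> v k \<and> v k \<le> b) \<and>
        (\<forall>k<n. \<forall>l<n. k \<noteq> l \<longrightarrow> v k \<le> u l \<or> v l \<le> u k) \<and>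
        (\<Sum>k<n. v k - u k) < d \<longrightarrow> (\<Sum>k<n. \<bar>f (v k) - f (u k)\<bar>) < e"
    by (elim exE conjE)
  show thesis
    by (rule that[OF \<open>d > 0\<close>]) (rule D[rule_format], assumption)
qed

lemma ac_const: "abs_cont_on a b (\<lambda>x. c)"
  unfolding abs_cont_on_def by (intro allI impI exI[of _ 1]) simp

lemma ac_add:
  assumes f: "abs_cont_on a b f" and g: "abs_cont_on a b g"
  shows "abs_cont_on a b (\<lambda>x. f x + g x)"
  unfolding abs_cont_on_def
proof (intro allI impI)
  fix e :: real assume e: "e > 0"
  obtain d1 where d1: "d1 > 0" and D1: "\<And>(n::nat) u v. (\<forall>k<n. a \<le> u k \<and> u k \<le> v k \<and> v k \<le> b) \<and>
        (\<forall>k<n. \<forall>l<n. k \<noteq> l \<longrightarrow> v k \<le> u l \<or> v l \<le> u k) \<and>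
        (\<Sum>k<n. v k - u k) < d1 \<Longrightarrow> (\<Sum>k<n. \<bar>f (v k) - f (u k)\<bar>) < e/2"
    using ac_D[OF f half_gt_zero[OF e]] by blast
  obtain d2 where d2: "d2 > 0" and D2: "\<And>(n::nat) u v. (\<forall>k<n. a \<le> u k \<and> u k \<le> v k \<and> v k \<le> b) \<and>
        (\<forall>k<n. \<forall>l<n. k \<noteq> l \<longrightarrow> v k \<le> u l \<or> v l \<le> u k) \<and>
        (\<Sum>k<n. v k - u k) < d2 \<Longrightarrow> (\<Sum>k<n. \<bar>g (v k) - g (u k)\<bar>) < e/2"
    using ac_D[OF g half_gt_zero[OF e]] by blast
  show "\<exists>d>0. \<forall>(n::nat) u v. (\<forall>k<n. a \<le> u k \<and> u k \<le> v k \<and> v k \<le> b) \<and>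
        (\<forall>k<n. \<forall>l<n. k \<noteq> l \<longrightarrow> v k \<le> u l \<or> v l \<le> u k) \<and>
        (\<Sum>k<n. v k - u k) < d \<longrightarrow> (\<Sum>k<n. \<bar>f (v k) + g (v k) - (f (u k) + g (u k))\<bar>) < e"
  proof (intro exI[of _ "min d1 d2"] conjI allI impI)
    show "min d1 d2 > 0" using d1 d2 by simp
    fix n :: nat and u v :: "nat \<Rightarrow> real" assume H: "(\<forall>k<n. a \<le> u k \<and> u k \<le> v k \<and> v k \<le> b) \<and>
        (\<forall>k<n. \<forall>l<n. k \<noteq> l \<longrightarrow> v k \<le> u l \<or> v l \<le> u k) \<and>
        (\<Sum>k<n. v k - u k) < min d1 d2"
    have "(\<Sum>k<n. \<bar>f (v k) + g (v k) - (f (u k) + g (u k))\<bar>) \<le>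
          (\<Sum>k<n. \<bar>f (v k) - f (u k)\<bar> + \<bar>g (v k) - g (u k)\<bar>)"
      by (rule sum_mono) linarith
    also have "\<dots> = (\<Sum>k<n. \<bar>f (v k) - f (u k)\<bar>) + (\<Sum>k<n. \<bar>g (v k) - g (u k)\<bar>)"
      by (rule sum.distrib)
    also have "\<dots> < e/2 + e/2"
      using D1[of n u v] D2[of n u v] H by (intro add_strict_mono) auto
    finally show "(\<Sum>k<n. \<bar>f (v k) + g (v k) - (f (u k) + g (u k))\<bar>) < e" by simp
  qed
qed

lemma ac_cmult:
  assumes f: "abs_cont_on a b f"
  shows "abs_cont_on a b (\<lambda>x. c * f x)"
proof (cases "c = 0")
  case True then show ?thesis using ac_const[of a b 0] by simp
next
  case False
  show ?thesis
  unfolding abs_cont_on_def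
  proof (intro allI impI)
  fix e :: real assume e: "e > 0"
  then have e': "e / \<bar>c\<bar> > 0" using False by simp
  obtain d1 where d1: "d1 > 0" and D1: "\<And>(n::nat) u v. (\<forall>k<n. a \<le> u k \<and> u k \<le> v k \<and> v k \<le> b) \<and>
        (\<forall>k<n. \<forall>l<n. k \<noteq> l \<longrightarrow> v k \<le> u l \<or> v l \<le> u k) \<and>
        (\<Sum>k<n. v k - u k) < d1 \<Longrightarrow> (\<Sum>k<n. \<bar>f (v k) - f (u k)\<bar>) < e / \<bar>c\<bar>"
    using ac_D[OF f e'] by blast
  show "\<exists>d>0. \<forall>(n::nat) u v. (\<forall>k<n. a \<le> u k \<and> u k \<le> v k \<and> v k \<le> b) \<and>
        (\<forall>k<n. \<forall>l<n. k \<noteq> l \<longrightarrow> v k \<le> u l \<or> v l \<le> u k) \<and>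
        (\<Sum>k<n. v k - u k) < d \<longrightarrow> (\<Sum>k<n. \<bar>c * f (v k) - c * f (u k)\<bar>) < e"
  proof (intro exI[of _ d1] conjI allI impI)
    show "d1 > 0" by fact
    fix n :: nat and u v :: "nat \<Rightarrow> real" assume H: "(\<forall>k<n. a \<le> u k \<and> u k \<le> v k \<and> v k \<le> b) \<and>
        (\<forall>k<n. \<forall>l<n. k \<noteq> l \<longrightarrow> v k \<le> u l \<or> v l \<le> u k) \<and>
        (\<Sum>k<n. v k - u k) < d1"
    have "(\<Sum>k<n. \<bar>c * f (v k) - c * f (u k)\<bar>) = \<bar>c\<bar> * (\<Sum>k<n. \<bar>f (v k) - f (u k)\<bar>)"
    proof -
      have "\<And>k. \<bar>c * f (v k) - c * f (u k)\<bar> = \<bar>c\<bar> * \<bar>f (v k) - f (u k)\<bar>"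
        by (metis abs_mult right_diff_distrib)
      then show ?thesis by (simp add: sum_distrib_left)
    qed
    also have "\<dots> < \<bar>c\<bar> * (e / \<bar>c\<bar>)"
      using D1[OF H] False by (intro mult_strict_left_mono) auto
    also have "\<dots> = e" using False by simp
    finally show "(\<Sum>k<n. \<bar>c * f (v k) - c * f (u k)\<bar>) < e" .
  qed
  qed
qed

lemma ac_id: "abs_cont_on a b (\<lambda>x. x)"
  unfolding abs_cont_on_def
proof (intro allI impI)
  fix e :: real assume e: "e > 0"
  show "\<exists>d>0. \<forall>(n::nat) u v. (\<forall>k<n. a \<le> u k \<and> u k \<le> v k \<and> v k \<le> b) \<and>
        (\<forall>k<n. \<forall>l<n. k \<noteq> l \<longrightarrow> v k \<le> u l \<or> v l \<le> u k) \<and>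
        (\<Sum>k<n. v k - u k) < d \<longrightarrow> (\<Sum>k<n. \<bar>v k - u k\<bar>) < e"
  proof (intro exI[of _ e] conjI allI impI)
    show "e > 0" by fact
    fix n :: nat and u v :: "nat \<Rightarrow> real" assume H: "(\<forall>k<n. a \<le> u k \<and> u k \<le> v k \<and> v k \<le> b) \<and>
        (\<forall>k<n. \<forall>l<n. k \<noteq> l \<longrightarrow> v k \<le> u l \<or> v l \<le> u k) \<and>
        (\<Sum>k<n. v k - u k) < e"
    have "(\<Sum>k<n. \<bar>v k - u k\<bar>) = (\<Sum>k<n. v k - u k)"
      using H by (intro sum.cong) auto
    then show "(\<Sum>k<n. \<bar>v k - u k\<bar>) < e" using H by simp
  qed
qed

lemma ac_sum:
  assumes "finite S" "\<And>j. j \<in> S \<Longrightarrow> abs_cont_on a b (f j)"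
  shows "abs_cont_on a b (\<lambda>x. \<Sum>j\<in>S. f j x)"
  using assms
proof (induction S rule: finite_induct)
  case empty then show ?case using ac_const[of a b 0] by simp
next
  case (insert j S)
  have "abs_cont_on a b (\<lambda>x. f j x + (\<Sum>j\<in>S. f j x))"
    using insert by (intro ac_add) auto
  then show ?case using insert(1,2) by (simp add: sum.insert)
qed



lemma tdiv_interval:
  fixes a b x :: real
  assumes p: "p tagged_division_of {a..b}" and xK: "(x,K) \<in> p"
  obtains u v where "K = {u..v}" "u \<le> v" "a \<le> u" "v \<le> b" "u \<le> x" "x \<le> v"
proof -
  obtain u v where K: "K = cbox u v" using tagged_division_ofD(4)[OF p xK] by blast
  have x: "x \<in> K" using tagged_division_ofD(2)[OF p xK] .
  have sub: "K \<subseteq> {a..b}" using tagged_division_ofD(3)[OF p xK] .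
  have K': "K = {u..v}" using K by (simp add: cbox_interval)
  have "u \<le> x" "x \<le> v" using x K' by auto
  moreover have "u \<in> K" "v \<in> K" using K' \<open>u \<le> x\<close> \<open>x \<le> v\<close> by auto
  ultimately show thesis using that[OF K'] sub by force
qed

lemma meas_Icc: "u \<le> v \<Longrightarrow> measure lebesgue {u..v::real} = v - u"
  by simp

lemma disj_intervals:
  fixes u1 v1 u2 v2 :: real
  assumes "u1 < v1" "u2 < v2" "{u1<..<v1} \<inter> {u2<..<v2} = {}"
  shows "v1 \<le> u2 \<or> v2 \<le> u1"
proof (rule ccontr)
  assume "\<not> (v1 \<le> u2 \<or> v2 \<le> u1)"
  then have "(max u1 u2 + min v1 v2)/2 \<in> {u1<..<v1} \<inter> {u2<..<v2}"
    using assms(1,2) by (auto simp: max_def min_def)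
  then show False using assms(3) by blast
qed

lemma ac_mono:
  fixes f :: "real \<Rightarrow> real" and a b :: real
  assumes ab: "a \<le> b" and ac: "abs_cont_on a b f" and N: "N \<in> null_sets lebesgue"
    and der: "\<And>x. x \<in> {a..b} \<Longrightarrow> x \<notin> N \<Longrightarrow> \<exists>D. (f has_real_derivative D) (at x) \<and> D \<le> 0"
  shows "f b \<le> f a"
proof -
  have key: "f b - f a \<le> \<epsilon> * (b - a) + \<epsilon>" if \<epsilon>: "\<epsilon> > 0" for \<epsilon>
  proof -
    from ac_D0[OF ac \<epsilon>] obtain d where d: "d > 0" and D0: "\<forall>(n::nat) u v. (\<forall>k<n. a \<le> u k \<and> u k \<le> v k \<and> v k \<le> b) \<and>
        (\<forall>k<n. \<forall>l<n. k \<noteq> l \<longrightarrow> v k \<le> u l \<or> v l \<le> u k) \<and>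
        (\<Sum>k<n. v k - u k) < d \<longrightarrow> (\<Sum>k<n. \<bar>f (v k) - f (u k)\<bar>) < \<epsilon>"
      by (elim exE conjE)
    note D = D0[rule_format]
    have Nl: "N \<in> sets lebesgue" and N0: "emeasure lebesgue N = 0" using N by auto
    obtain T where T: "open T" "N \<subseteq> T" "(T - N) \<in> lmeasurable" "emeasure lebesgue (T - N) < ennreal d"
      using sets_lebesgue_outer_open[OF Nl d] by blast
    have TU: "T = (T - N) \<union> N" using T(2) by blast
    have TNs: "T - N \<in> sets lebesgue" using T(3) by (simp add: fmeasurable_def)
    have Ts: "T \<in> sets lebesgue" using TU TNs Nl by (metis sets.Un)
    have "emeasure lebesgue T \<le> emeasure lebesgue (T - N) + emeasure lebesgue N"
      by (subst TU, rule emeasure_subadditive[OF TNs Nl])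
    then have Tlt: "emeasure lebesgue T < ennreal d" using T(4) N0 by simp
    have Tf: "T \<in> lmeasurable"
      by (intro fmeasurableI[OF Ts]) (metis Tlt ennreal_less_top infinity_ennreal_def order.strict_trans)
    have mT: "measure lebesgue T < d"
      using Tlt emeasure_eq_measure2[OF Tf] by (simp add: ennreal_less_iff)
    have "\<forall>x. \<exists>\<delta>. \<delta> > 0 \<and> (x \<in> {a..b} \<and> x \<notin> N \<longrightarrow> (\<forall>y. \<bar>y - x\<bar> < \<delta> \<longrightarrow>
             (x \<le> y \<longrightarrow> f y - f x \<le> \<epsilon> * (y - x)) \<and> (y \<le> x \<longrightarrow> f x - f y \<le> \<epsilon> * (x - y))))
           \<and> (x \<in> N \<longrightarrow> ball x \<delta> \<subseteq> T)"
    proof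
      fix x
      show "\<exists>\<delta>. \<delta> > 0 \<and> (x \<in> {a..b} \<and> x \<notin> N \<longrightarrow> (\<forall>y. \<bar>y - x\<bar> < \<delta> \<longrightarrow>
             (x \<le> y \<longrightarrow> f y - f x \<le> \<epsilon> * (y - x)) \<and> (y \<le> x \<longrightarrow> f x - f y \<le> \<epsilon> * (x - y))))
           \<and> (x \<in> N \<longrightarrow> ball x \<delta> \<subseteq> T)"
      proof (cases "x \<in> N")
        case True
        then have "x \<in> T" using T(2) by blast
        then obtain r where "r > 0" "ball x r \<subseteq> T" using T(1) open_contains_ball by blast
        then show ?thesis using True by blast
      next
        case False
        show ?thesis
        proof (cases "x \<in> {a..b}")
          case True
          obtain Dx where Dx: "(f has_real_derivative Dx) (at x)" "Dx \<le> 0" using der[OF True False] by blast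
          then have "(f has_derivative (\<lambda>h. Dx * h)) (at x)" by (simp add: has_field_derivative_def)
          then obtain r where r: "r > 0" and R: "\<And>y. norm (y - x) < r \<Longrightarrow>
              norm (f y - f x - Dx * (y - x)) \<le> \<epsilon> * norm (y - x)"
            using \<epsilon> unfolding has_derivative_at_alt by blast
          have "(\<forall>y. \<bar>y - x\<bar> < r \<longrightarrow>
             (x \<le> y \<longrightarrow> f y - f x \<le> \<epsilon> * (y - x)) \<and> (y \<le> x \<longrightarrow> f x - f y \<le> \<epsilon> * (x - y)))"
          proof (intro allI impI conjI)
            fix y assume y: "\<bar>y - x\<bar> < r"
            have Ry: "\<bar>f y - f x - Dx * (y - x)\<bar> \<le> \<epsilon> * \<bar>y - x\<bar>" using R[of y] y by simp
            { assume "x \<le> y"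
              then have "Dx * (y - x) \<le> 0" using Dx(2) by (simp add: mult_nonpos_nonneg)
              then show "f y - f x \<le> \<epsilon> * (y - x)" using Ry \<open>x \<le> y\<close> by (simp add: abs_le_iff)
            }
            { assume "y \<le> x"
              then have "Dx * (x - y) \<le> 0" using Dx(2) by (simp add: mult_nonpos_nonneg)
              then show "f x - f y \<le> \<epsilon> * (x - y)" using Ry \<open>y \<le> x\<close>
                by (simp add: abs_le_iff algebra_simps)
            }
          qed
          then show ?thesis using r False by blast
        next
          case False2: False
          show ?thesis using False False2 by (intro exI[of _ 1]) auto
        qed
      qed
    qed
    then have "\<exists>\<delta>. \<forall>x. \<delta> x > 0 \<and> (x \<in> {a..b} \<and> x \<notin> N \<longrightarrow> (\<forall>y. \<bar>y - x\<bar> < \<delta> x \<longrightarrow>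
             (x \<le> y \<longrightarrow> f y - f x \<le> \<epsilon> * (y - x)) \<and> (y \<le> x \<longrightarrow> f x - f y \<le> \<epsilon> * (x - y))))
           \<and> (x \<in> N \<longrightarrow> ball x (\<delta> x) \<subseteq> T)"
      by (rule choice)
    then obtain \<delta> where \<delta>: "\<And>x. \<delta> x > 0"
      and \<delta>1: "\<And>x y. x \<in> {a..b} \<Longrightarrow> x \<notin> N \<Longrightarrow> \<bar>y - x\<bar> < \<delta> x \<Longrightarrow> x \<le> y \<Longrightarrow> f y - f x \<le> \<epsilon> * (y - x)"
      and \<delta>2: "\<And>x y. x \<in> {a..b} \<Longrightarrow> x \<notin> N \<Longrightarrow> \<bar>y - x\<bar> < \<delta> x \<Longrightarrow> y \<le> x \<Longrightarrow> f x - f y \<le> \<epsilon> * (x - y)"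
      and \<delta>3: "\<And>x. x \<in> N \<Longrightarrow> ball x (\<delta> x) \<subseteq> T"
      by metis
    have g: "gauge (\<lambda>x. ball x (\<delta> x))" using \<delta> by (intro gauge_ball_dependent) auto
    obtain p where p: "p tagged_division_of {a..b}" and fine: "(\<lambda>x. ball x (\<delta> x)) fine p"
      using fine_division_exists[OF g, of a b] by (auto simp: cbox_interval)
    have finp: "finite p" using p by blast
    define \<phi> where "\<phi> = (\<lambda>(x::real, K::real set). f (Sup K) - f (Inf K))"
    define len where "len = (\<lambda>(x::real, K::real set). Sup K - Inf K)"
    define P1 where "P1 = {xK \<in> p. fst xK \<in> N \<and> Inf (snd xK) < Sup (snd xK)}"
    have P1p: "P1 \<subseteq> p" unfolding P1_def by blast
    have finP1: "finite P1" using finp P1p finite_subset by blast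
    have elem: "\<phi> xK \<le> \<epsilon> * len xK + (if xK \<in> P1 then \<bar>\<phi> xK\<bar> else 0)" if xK: "xK \<in> p" for xK
    proof -
      obtain x K where xK': "xK = (x, K)" by fastforce
      obtain u v where uv: "K = {u..v}" "u \<le> v" "a \<le> u" "v \<le> b" "u \<le> x" "x \<le> v"
        using tdiv_interval[OF p xK[unfolded xK']] by blast
      have SI: "Sup K = v" "Inf K = u" using uv by auto
      show ?thesis
      proof (cases "x \<in> N")
        case False
        have xab: "x \<in> {a..b}" using uv by auto
        have sub: "K \<subseteq> ball x (\<delta> x)" using fine xK unfolding xK' fine_def by blast
        have "u \<in> K" "v \<in> K" using uv by auto
        then have "\<bar>u - x\<bar> < \<delta> x" "\<bar>v - x\<bar> < \<delta> x" using sub by (auto simp: dist_real_def)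
        then have "f v - f x \<le> \<epsilon> * (v - x)" "f x - f u \<le> \<epsilon> * (x - u)"
          using \<delta>1[OF xab False] \<delta>2[OF xab False] uv by auto
        moreover have "xK \<notin> P1" using False unfolding P1_def xK' by auto
        ultimately show ?thesis unfolding xK' \<phi>_def len_def using SI by (simp add: algebra_simps)
      next
        case True
        show ?thesis
        proof (cases "u < v")
          case True2: True
          have "xK \<in> P1" using True True2 xK SI unfolding P1_def xK' by auto
          moreover have "\<epsilon> * len xK \<ge> 0" using \<epsilon> uv SI unfolding len_def xK' by simp
          ultimately show ?thesis by simp
        next
          case False
          then have "u = v" using uv by simp
          then show ?thesis unfolding xK' \<phi>_def len_def using SI by simp
        qed
      qed
    qed
    have "f b - f a = (\<Sum>xK\<in>p. \<phi> xK)"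
      unfolding \<phi>_def using additive_tagged_division_1[OF ab p, of f] by simp
    also have "\<dots> \<le> (\<Sum>xK\<in>p. \<epsilon> * len xK + (if xK \<in> P1 then \<bar>\<phi> xK\<bar> else 0))"
      by (rule sum_mono) (rule elem)
    also have "\<dots> = \<epsilon> * (\<Sum>xK\<in>p. len xK) + (\<Sum>xK\<in>P1. \<bar>\<phi> xK\<bar>)"
      using P1p finp by (simp add: sum.distrib sum_distrib_left sum.If_cases Int_absorb1 Int_absorb2)
    also have "(\<Sum>xK\<in>p. len xK) = b - a"
      unfolding len_def using additive_tagged_division_1[OF ab p, of "\<lambda>x. x"] by simp
    finally have S1: "f b - f a \<le> \<epsilon> * (b - a) + (\<Sum>xK\<in>P1. \<bar>\<phi> xK\<bar>)" .
    have "(\<Sum>xK\<in>P1. \<bar>\<phi> xK\<bar>) < \<epsilon>"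
proof -
      have Ptd: "P1 tagged_partial_division_of {a..b}"
        using tagged_partial_division_subset[OF _ P1p] p unfolding tagged_division_of_def by blast
      have Pdiv: "(snd ` P1) division_of \<Union>(snd ` P1)"
        by (rule partial_division_of_tagged_division[OF Ptd])
      have P1el: "\<exists>x u v. xK = (x, {u..v}) \<and> u < v \<and> a \<le> u \<and> v \<le> b \<and> x \<in> N \<and> {u..v} \<subseteq> T"
        if xK: "xK \<in> P1" for xK
      proof -
        obtain x K where xK': "xK = (x, K)" by fastforce
        have xKp: "(x, K) \<in> p" and xN: "x \<in> N" and IS: "Inf K < Sup K"
          using xK unfolding P1_def xK' by auto
        obtain u v where uv: "K = {u..v}" "u \<le> v" "a \<le> u" "v \<le> b" "u \<le> x" "x \<le> v"
          using tdiv_interval[OF p xKp] by blast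
        have "u < v" using IS uv by auto
        have "K \<subseteq> ball x (\<delta> x)" using fine xKp unfolding fine_def by blast
        then have "K \<subseteq> T" using \<delta>3[OF xN] by blast
        then show ?thesis using xK' uv \<open>u < v\<close> xN by blast
      qed
      have inj: "inj_on snd P1"
      proof (rule inj_onI)
        fix y z assume y: "y \<in> P1" and z: "z \<in> P1" and eq: "snd y = snd z"
        show "y = z"
        proof (rule ccontr)
          assume ne: "y \<noteq> z"
          obtain x1 u1 v1 where Y: "y = (x1, {u1..v1})" "u1 < v1" using P1el[OF y] by blast
          obtain x2 u2 v2 where Z: "z = (x2, {u2..v2})" using P1el[OF z] by blast
          have "interior {u1..v1} \<inter> interior {u2..v2} = {}"
            using tagged_division_ofD(5)[OF p, of x1 "{u1..v1}" x2 "{u2..v2}"] y z P1p ne Y Z by auto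
          moreover have "{u2..v2} = {u1..v1}" using eq Y Z by simp
          ultimately have "{u1<..<v1} = {}" by simp
          then show False using Y(2) by simp
        qed
      qed
      have "(\<Sum>xK\<in>P1. len xK) = (\<Sum>xK\<in>P1. measure lebesgue (snd xK))"
      proof (rule sum.cong)
        fix xK assume "xK \<in> P1"
        then obtain x u v where "xK = (x, {u..v})" "u < v" using P1el by blast
        then show "len xK = measure lebesgue (snd xK)" unfolding len_def by simp
      qed simp
      also have "\<dots> = (\<Sum>K\<in>snd ` P1. measure lebesgue K)"
        using sum.reindex[OF inj, of "measure lebesgue"] by (simp add: comp_def)
      also have "\<dots> = measure lebesgue (\<Union>(snd ` P1))" by (rule content_division[OF Pdiv])
      also have "\<dots> \<le> measure lebesgue T"
      proof (rule measure_mono_fmeasurable)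
        show "\<Union>(snd ` P1) \<subseteq> T" using P1el by fastforce
        show "\<Union>(snd ` P1) \<in> sets lebesgue" using lmeasurable_division[OF Pdiv] by (simp add: fmeasurable_def)
        show "T \<in> fmeasurable lebesgue" by (rule Tf)
      qed
      finally have lenP1: "(\<Sum>xK\<in>P1. len xK) < d" using mT by linarith
      define n where "n = card P1"
      obtain h where h: "bij_betw h {..<n} P1"
        using ex_bij_betw_nat_finite[OF finP1] unfolding n_def by (auto simp: lessThan_atLeast0)
      define U where "U = (\<lambda>k. Inf (snd (h k)))"
      define V where "V = (\<lambda>k. Sup (snd (h k)))"
      have hP: "h k \<in> P1" if "k < n" for k using h that by (auto dest: bij_betwE)
      have sphi: "(\<Sum>xK\<in>P1. \<bar>\<phi> xK\<bar>) = (\<Sum>k<n. \<bar>f (V k) - f (U k)\<bar>)"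
        using sum.reindex_bij_betw[OF h, of "\<lambda>xK. \<bar>\<phi> xK\<bar>"]
        unfolding \<phi>_def U_def V_def by (simp add: case_prod_beta)
      have slen: "(\<Sum>xK\<in>P1. len xK) = (\<Sum>k<n. V k - U k)"
        using sum.reindex_bij_betw[OF h, of len]
        unfolding len_def U_def V_def by (simp add: case_prod_beta)
      have c1: "\<forall>k<n. a \<le> U k \<and> U k \<le> V k \<and> V k \<le> b"
      proof (intro allI impI)
        fix k assume "k < n"
        then obtain x u v where "h k = (x, {u..v})" "u < v" "a \<le> u" "v \<le> b" using P1el[OF hP] by blast
        then show "a \<le> U k \<and> U k \<le> V k \<and> V k \<le> b" unfolding U_def V_def by simp
      qed
      have c2: "\<forall>k<n. \<forall>l<n. k \<noteq> l \<longrightarrow> V k \<le> U l \<or> V l \<le> U k"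
      proof (intro allI impI)
        fix k l assume k: "k < n" and l: "l < n" and kl: "k \<noteq> l"
        have ne: "h k \<noteq> h l"
          using bij_betw_imp_inj_on[OF h] k l kl by (auto dest: inj_onD)
        obtain x1 u1 v1 where Y: "h k = (x1, {u1..v1})" "u1 < v1" using P1el[OF hP[OF k]] by blast
        obtain x2 u2 v2 where Z: "h l = (x2, {u2..v2})" "u2 < v2" using P1el[OF hP[OF l]] by blast
        have "interior {u1..v1} \<inter> interior {u2..v2} = {}"
          using tagged_division_ofD(5)[OF p, of x1 "{u1..v1}" x2 "{u2..v2}"] hP[OF k] hP[OF l] P1p ne Y Z by auto
        then have "v1 \<le> u2 \<or> v2 \<le> u1" using disj_intervals[OF Y(2) Z(2)] by simp
        then show "V k \<le> U l \<or> V l \<le> U k" unfolding U_def V_def using Y Z by simp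
      qed
      show ?thesis unfolding sphi
        by (rule D) (use c1 c2 lenP1 slen in auto)
    qed
    then show ?thesis using S1 by simp
  qed
  show ?thesis
  proof (rule ccontr)
    assume "\<not> f b \<le> f a"
    then have pos: "f b - f a > 0" by simp
    define c where "c = b - a + 1"
    have c0: "c > 0" using ab unfolding c_def by simp
    define \<epsilon> where "\<epsilon> = (f b - f a) / (2 * c)"
    have e0: "\<epsilon> > 0" using pos c0 unfolding \<epsilon>_def by simp
    have "\<epsilon> * c = (f b - f a) / 2"
      unfolding \<epsilon>_def using c0 by simp
    moreover have "\<epsilon> * (b - a) + \<epsilon> = \<epsilon> * c" unfolding c_def by (simp add: algebra_simps)
    ultimately have "\<epsilon> * (b - a) + \<epsilon> = (f b - f a) / 2" by simp
    then show False using key[OF e0] pos by simp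
  qed
qed



lemma cum_deriv:
  "i \<le> I \<Longrightarrow> (\<Sum>j\<le>i. rate_deriv I \<theta> j) = - \<theta> i"
proof (induction i)
  case 0 then show ?case by (simp add: rate_deriv_def)
next
  case (Suc i)
  then show ?case by (simp add: rate_deriv_def)
qed

lemma double_sum:
  fixes g :: "nat \<Rightarrow> real"
  shows "(\<Sum>i\<le>n. \<Sum>j\<le>i. g j) = (\<Sum>j\<le>n. (real n + 1 - real j) * g j)"
proof (induction n)
  case 0 then show ?case by simp
next
  case (Suc n)
  have "(\<Sum>i\<le>Suc n. \<Sum>j\<le>i. g j) = (\<Sum>j\<le>n. (real n + 1 - real j) * g j) + (\<Sum>j\<le>Suc n. g j)"
    using Suc by simp
  also have "\<dots> = (\<Sum>j\<le>n. (real n + 1 - real j) * g j + g j) + g (Suc n)"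
    by (simp add: sum.distrib)
  also have "\<dots> = (\<Sum>j\<le>Suc n. (real (Suc n) + 1 - real j) * g j)"
    by (simp add: algebra_simps)
  finally show ?case .
qed

lemma M_ident:
  assumes "g \<in> simplexI I"
  shows "(\<Sum>i\<le>I. \<Sum>j\<le>i. g j) = real (I + 1) - (\<Sum>k\<le>I+1. real k * g k)"
proof -
  have s: "(\<Sum>j\<le>I. g j) = 1 - g (I+1)" using assms unfolding simplexI_def by simp
  have "(\<Sum>i\<le>I. \<Sum>j\<le>i. g j) = (\<Sum>j\<le>I. (real I + 1) * g j - real j * g j)"
    unfolding double_sum by (simp add: algebra_simps)
  also have "\<dots> = (real I + 1) * (\<Sum>j\<le>I. g j) - (\<Sum>j\<le>I. real j * g j)"
    by (simp add: sum_subtractf sum_distrib_left)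
  also have "\<dots> = real (I + 1) - (\<Sum>k\<le>I+1. real k * g k)"
    unfolding s by (simp add: algebra_simps)
  finally show ?thesis .
qed

lemma stmt_form:
  "(\<Sum>i\<le>I. real i * (\<omega>::nat\<Rightarrow>real) i) + real (I + 1) * \<omega> (I + 1) = (\<Sum>k\<le>I+1. real k * \<omega> k)"
  by simp

lemma necessity:
  fixes I :: nat and \<beta> :: real and \<alpha> \<omega> :: "nat \<Rightarrow> real"
  assumes b0: "\<beta> > 0" and sa: "\<alpha> \<in> simplexI I" and so: "\<omega> \<in> simplexI I"
    and fe: "feasible I \<alpha> \<omega> \<beta>"
  shows "(\<forall>i\<le>I. (\<Sum>j\<le>i. \<alpha> j) \<ge> (\<Sum>j\<le>i. \<omega> j)) \<and>
    (\<Sum>i\<le>I. real i * \<omega> i) + real (I + 1) * \<omega> (I + 1) \<le> (\<Sum>k\<le>I+1. real k * \<alpha> k) + \<beta>"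
proof -
  obtain \<gamma> where vo: "valid_occupancy I \<beta> \<gamma>" and g0: "\<forall>j\<le>I+1. \<gamma> 0 j = \<alpha> j"
    and gb: "\<forall>j\<le>I+1. \<gamma> \<beta> j = \<omega> j"
    using fe unfolding feasible_def by blast
  have acj: "\<And>j. j \<le> I+1 \<Longrightarrow> abs_cont_on 0 \<beta> (\<lambda>x. \<gamma> x j)" using vo unfolding valid_occupancy_def by blast
  obtain \<theta> where ae: "AE x in lebesgue. x \<in> {0..\<beta>} \<longrightarrow>
          (\<forall>j\<le>I+1. ((\<lambda>t. \<gamma> t j) has_real_derivative rate_deriv I (\<theta> x) j) (at x))
          \<and> \<theta> x \<in> simplexI I"
    using vo unfolding valid_occupancy_def by blast
  then obtain N where NP: "\<And>x. x \<in> space lebesgue - N \<Longrightarrow> x \<in> {0..\<beta>} \<longrightarrow>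
          (\<forall>j\<le>I+1. ((\<lambda>t. \<gamma> t j) has_real_derivative rate_deriv I (\<theta> x) j) (at x))
          \<and> \<theta> x \<in> simplexI I" and N: "N \<in> null_sets lebesgue"
    by (rule AE_E3) blast
  have dx: "((\<lambda>t. \<gamma> t j) has_real_derivative rate_deriv I (\<theta> x) j) (at x)"
    if "x \<in> {0..\<beta>}" "x \<notin> N" "j \<le> I+1" for x j
    using NP[of x] that by auto
  have th: "\<theta> x \<in> simplexI I" if "x \<in> {0..\<beta>}" "x \<notin> N" for x
    using NP[of x] that by auto
  have ab: "0 \<le> \<beta>" using b0 by simp
  have C1: "(\<Sum>j\<le>i. \<omega> j) \<le> (\<Sum>j\<le>i. \<alpha> j)" if i: "i \<le> I" for i
  proof -
    have ac: "abs_cont_on 0 \<beta> (\<lambda>x. \<Sum>j\<le>i. \<gamma> x j)"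
      by (rule ac_sum) (use acj i in auto)
    have "(\<lambda>x. \<Sum>j\<le>i. \<gamma> x j) \<beta> \<le> (\<lambda>x. \<Sum>j\<le>i. \<gamma> x j) 0"
    proof (rule ac_mono[OF ab ac N])
      fix x assume x: "x \<in> {0..\<beta>}" "x \<notin> N"
      have "((\<lambda>x. \<Sum>j\<le>i. \<gamma> x j) has_real_derivative (\<Sum>j\<le>i. rate_deriv I (\<theta> x) j)) (at x)"
        by (rule DERIV_sum) (use dx[OF x] i in auto)
      moreover have "(\<Sum>j\<le>i. rate_deriv I (\<theta> x) j) \<le> 0"
        using cum_deriv[OF i] th[OF x] i unfolding simplexI_def by auto
      ultimately show "\<exists>D. ((\<lambda>x. \<Sum>j\<le>i. \<gamma> x j) has_real_derivative D) (at x) \<and> D \<le> 0" by blast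
    qed
    then show ?thesis using g0 gb i by simp
  qed
  define H where "H = (\<lambda>x. (-1) * (\<Sum>i\<le>I. \<Sum>j\<le>i. \<gamma> x j) + (-1) * x)"
  have acH: "abs_cont_on 0 \<beta> H"
    unfolding H_def
    by (intro ac_add ac_cmult ac_id ac_sum) (use acj in auto)
  have "H \<beta> \<le> H 0"
  proof (rule ac_mono[OF ab acH N])
    fix x assume x: "x \<in> {0..\<beta>}" "x \<notin> N"
    have "(H has_real_derivative ((-1) * (\<Sum>i\<le>I. \<Sum>j\<le>i. rate_deriv I (\<theta> x) j) + (-1) * 1)) (at x)"
      unfolding H_def
      by (intro DERIV_add DERIV_cmult DERIV_sum DERIV_ident) (use dx[OF x] in auto)
    moreover have "(-1) * (\<Sum>i\<le>I. \<Sum>j\<le>i. rate_deriv I (\<theta> x) j) + (-1) * 1 \<le> (0::real)"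
    proof -
      have "(\<Sum>i\<le>I. \<Sum>j\<le>i. rate_deriv I (\<theta> x) j) = (\<Sum>i\<le>I. - \<theta> x i)"
        by (rule sum.cong) (auto simp: cum_deriv)
      moreover have "(\<Sum>i\<le>I. \<theta> x i) \<le> 1"
      proof -
        have "(\<forall>j\<le>Suc I. 0 \<le> \<theta> x j) \<and> sum (\<theta> x) {..I} + \<theta> x (Suc I) = 1"
          using th[OF x] unfolding simplexI_def by simp
        then show ?thesis by (metis le_add_same_cancel1 le_refl)
      qed
      ultimately show ?thesis by (simp add: sum_negf)
    qed
    ultimately show "\<exists>D. (H has_real_derivative D) (at x) \<and> D \<le> 0" by blast
  qed
  moreover have "(\<Sum>i\<le>I. \<Sum>j\<le>i. \<gamma> 0 j) = (\<Sum>i\<le>I. \<Sum>j\<le>i. \<alpha> j)"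
    using g0 by (intro sum.cong) auto
  moreover have "(\<Sum>i\<le>I. \<Sum>j\<le>i. \<gamma> \<beta> j) = (\<Sum>i\<le>I. \<Sum>j\<le>i. \<omega> j)"
    using gb by (intro sum.cong) auto
  ultimately have "(\<Sum>i\<le>I. \<Sum>j\<le>i. \<alpha> j) - (\<Sum>i\<le>I. \<Sum>j\<le>i. \<omega> j) \<le> \<beta>"
    unfolding H_def by simp
  then have "(\<Sum>k\<le>I+1. real k * \<omega> k) \<le> (\<Sum>k\<le>I+1. real k * \<alpha> k) + \<beta>"
    unfolding M_ident[OF sa] M_ident[OF so] by simp
  then show ?thesis using C1 by (simp only: stmt_form) blast
qed

lemma sufficiency:
  fixes I :: nat and \<beta> :: real and \<alpha> \<omega> :: "nat \<Rightarrow> real"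
  assumes b0: "\<beta> > 0" and sa: "\<alpha> \<in> simplexI I" and so: "\<omega> \<in> simplexI I"
    and c1: "\<forall>i\<le>I. (\<Sum>j\<le>i. \<alpha> j) \<ge> (\<Sum>j\<le>i. \<omega> j)"
    and c2: "(\<Sum>i\<le>I. real i * \<omega> i) + real (I + 1) * \<omega> (I + 1) \<le> (\<Sum>k\<le>I+1. real k * \<alpha> k) + \<beta>"
  shows "feasible I \<alpha> \<omega> \<beta>"
proof -
  define A where "A = (\<lambda>i. \<Sum>j\<le>i. \<alpha> j)"
  define W where "W = (\<lambda>i. \<Sum>j\<le>i. \<omega> j)"
  define S where "S = (\<Sum>i\<le>I. A i - W i)"
  have S_le: "S \<le> \<beta>"
  proof -
    have "S = (\<Sum>i\<le>I. \<Sum>j\<le>i. \<alpha> j) - (\<Sum>i\<le>I. \<Sum>j\<le>i. \<omega> j)"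
      unfolding S_def A_def W_def by (simp add: sum_subtractf)
    also have "\<dots> = (\<Sum>k\<le>I+1. real k * \<omega> k) - (\<Sum>k\<le>I+1. real k * \<alpha> k)"
      unfolding M_ident[OF sa] M_ident[OF so] by simp
    finally show ?thesis using c2 unfolding stmt_form by simp
  qed
  have AW: "A i \<ge> W i" if "i \<le> I" for i using c1 that unfolding A_def W_def by simp
  have sa1: "(\<Sum>j\<le>I. \<alpha> j) + \<alpha> (Suc I) = 1" and sa0: "\<And>j. j \<le> I+1 \<Longrightarrow> \<alpha> j \<ge> 0"
    using sa unfolding simplexI_def by auto
  have so1: "(\<Sum>j\<le>I. \<omega> j) + \<omega> (Suc I) = 1" and so0: "\<And>j. j \<le> I+1 \<Longrightarrow> \<omega> j \<ge> 0"
    using so unfolding simplexI_def by auto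
  define \<theta>c where "\<theta>c = (\<lambda>i. if i \<le> I then (A i - W i) / \<beta> else if i = I + 1 then 1 - S / \<beta> else 0)"
  define \<gamma> where "\<gamma> = (\<lambda>(x::real) j. \<alpha> j + ((\<omega> j - \<alpha> j) / \<beta>) * x)"
  have th_simp: "\<theta>c \<in> simplexI I"
  proof -
    have "\<forall>j\<le>I+1. 0 \<le> \<theta>c j"
      using AW b0 S_le unfolding \<theta>c_def by (auto simp: field_simps)
    moreover have "(\<Sum>j\<le>I. \<theta>c j) = S / \<beta>"
      unfolding \<theta>c_def S_def by (simp add: sum_divide_distrib)
    then have "(\<Sum>j\<le>I+1. \<theta>c j) = 1" by (simp add: \<theta>c_def)
    ultimately show ?thesis unfolding simplexI_def by simp
  qed
  have rd: "rate_deriv I \<theta>c j = (\<omega> j - \<alpha> j) / \<beta>" if j: "j \<le> I + 1" for j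
  proof (cases "j = 0")
    case True then show ?thesis unfolding rate_deriv_def \<theta>c_def A_def W_def by (simp add: minus_divide_left)
  next
    case False
    show ?thesis
    proof (cases "j \<le> I")
      case True
      obtain i where i: "j = Suc i" using False by (cases j) auto
      have "A j = A i + \<alpha> j" "W j = W i + \<omega> j" unfolding A_def W_def i by simp_all
      then show ?thesis using True False i b0 unfolding rate_deriv_def \<theta>c_def
        by (simp add: field_simps)
    next
      case False2: False
      then have jI: "j = I + 1" using j by simp
      have "A I = 1 - \<alpha> (I+1)" "W I = 1 - \<omega> (I+1)" using sa1 so1 unfolding A_def W_def by simp_all
      then show ?thesis using jI b0 unfolding rate_deriv_def \<theta>c_def by (simp add: field_simps)
    qed
  qed
  have vo: "valid_occupancy I \<beta> \<gamma>"
    unfolding valid_occupancy_def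
  proof (intro conjI ballI allI impI)
    fix j assume "j \<le> I + 1"
    show "abs_cont_on 0 \<beta> (\<lambda>x. \<gamma> x j)"
      unfolding \<gamma>_def by (rule ac_add[OF ac_const ac_cmult[OF ac_id]])
  next
    fix x assume x: "x \<in> {0..\<beta>}"
    have t: "0 \<le> x / \<beta>" "x / \<beta> \<le> 1" using x b0 by auto
    have eq: "\<gamma> x j = \<alpha> j * (1 - x / \<beta>) + \<omega> j * (x / \<beta>)" for j
      unfolding \<gamma>_def using b0 by (simp add: field_simps)
    have "\<forall>j\<le>I+1. 0 \<le> \<gamma> x j"
    proof (intro allI impI)
      fix j assume j: "j \<le> I + 1"
      have h1: "0 \<le> \<alpha> j * (1 - x / \<beta>)" using sa0[OF j] t by (intro mult_nonneg_nonneg) auto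
      have h2: "0 \<le> \<omega> j * (x / \<beta>)" using so0[OF j] t by (intro mult_nonneg_nonneg) auto
      show "0 \<le> \<gamma> x j" unfolding eq using h1 h2 by linarith
    qed
    moreover have "(\<Sum>j\<le>I+1. \<gamma> x j) = (\<Sum>j\<le>I+1. \<alpha> j) * (1 - x / \<beta>) + (\<Sum>j\<le>I+1. \<omega> j) * (x / \<beta>)"
      unfolding eq by (simp only: sum.distrib sum_distrib_right)
    then have "(\<Sum>j\<le>I+1. \<gamma> x j) = 1" using sa so unfolding simplexI_def by simp
    ultimately show "\<gamma> x \<in> simplexI I" unfolding simplexI_def by simp
  next
    show "\<exists>\<theta>. AE x in lebesgue. x \<in> {0..\<beta>} \<longrightarrow>
          (\<forall>j\<le>I+1. ((\<lambda>t. \<gamma> t j) has_real_derivative rate_deriv I (\<theta> x) j) (at x)) \<and> \<theta> x \<in> simplexI I"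
    proof (intro exI[of _ "\<lambda>_. \<theta>c"] AE_I2 impI conjI allI)
      fix x j assume "j \<le> I + 1"
      have "((\<lambda>t. \<gamma> t j) has_real_derivative 0 + ((\<omega> j - \<alpha> j) / \<beta>) * 1) (at x)"
        unfolding \<gamma>_def by (intro DERIV_add DERIV_const DERIV_cmult DERIV_ident)
      then show "((\<lambda>t. \<gamma> t j) has_real_derivative rate_deriv I \<theta>c j) (at x)"
        using rd[OF \<open>j \<le> I + 1\<close>] by simp
    next
      show "\<theta>c \<in> simplexI I" by (rule th_simp)
    qed
  qed
  have "\<forall>j\<le>I+1. \<gamma> 0 j = \<alpha> j" unfolding \<gamma>_def by simp
  moreover have "\<forall>j\<le>I+1. \<gamma> \<beta> j = \<omega> j" unfolding \<gamma>_def using b0 by simp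
  ultimately show ?thesis unfolding feasible_def using vo by blast
qed

theorem lemma2p4:
  fixes I :: nat and \<beta> :: real and \<alpha> \<omega> :: "nat \<Rightarrow> real"
  assumes "\<beta> > 0" and "\<alpha> \<in> simplexI I" and "\<omega> \<in> simplexI I" and "\<alpha> 0 > 0"
  shows "feasible I \<alpha> \<omega> \<beta> \<longleftrightarrow>
    (\<forall>i\<le>I. (\<Sum>j\<le>i. \<alpha> j) \<ge> (\<Sum>j\<le>i. \<omega> j)) \<and>
    (\<Sum>i\<le>I. real i * \<omega> i) + real (I + 1) * \<omega> (I + 1) \<le> (\<Sum>k\<le>I+1. real k * \<alpha> k) + \<beta>"
  using necessity[OF assms(1-3)] sufficiency[OF assms(1-3)] by blast

end
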